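(* Let $L>0$ and let $X_1,\dots,X_t$ be independent nonnegative discrete random variables, each of which takes value either $0$ or a value at least $L$. If $\sum_{j=1}^t\mathbb{E}[X_j]\ge L$, then $\mathbb{E}[\max_j X_j]\ge L/2$. *)

theory Defs
  imports "HOL-Probability.Probability"
begin

end

theory Submission
  imports Defs
begin
lemma first_nz:
  fixes f :: "nat \<Rightarrow> real"
  assumes "\<And>j. j \<in> {1..t} \<Longrightarrow> f j \<ge> 0"
  shows "(\<Sum>j\<in>{1..t}. f j * (\<Prod>i\<in>{1..<j}. if f i = 0 then 1 else 0)) \<le> Max (insert 0 (f ` {1..t}))"
  using assms
proof (induction t)
  case 0
  then show ?case by simp
next
  case (Suc t)
  have IH: "(\<Sum>j\<in>{1..t}. f j * (\<Prod>i\<in>{1..<j}. if f i = 0 then 1 else 0)) \<le> Max (insert 0 (f ` {1..t}))"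
    using Suc by auto
  have M: "Max (insert 0 (f ` {1..t})) \<le> Max (insert 0 (f ` {1..Suc t}))"
    by (rule Max_mono) auto
  have fS: "f (Suc t) \<le> Max (insert 0 (f ` {1..Suc t}))"
    by (rule Max_ge) auto
  have split: "(\<Sum>j\<in>{1..Suc t}. f j * (\<Prod>i\<in>{1..<j}. if f i = 0 then 1 else 0))
     = (\<Sum>j\<in>{1..t}. f j * (\<Prod>i\<in>{1..<j}. if f i = 0 then 1 else 0)) + f (Suc t) * (\<Prod>i\<in>{1..t}. if f i = 0 then (1::real) else 0)"
    by (simp add: atLeastLessThanSuc_atLeastAtMost)
  show ?case
  proof (cases "\<forall>i\<in>{1..t}. f i = 0")
    case True
    have S0: "(\<Sum>j\<in>{1..t}. f j * (\<Prod>i\<in>{1..<j}. if f i = 0 then 1 else 0)) = 0"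
      using True by (intro sum.neutral) auto
    have P1: "(\<Prod>i\<in>{1..t}. if f i = 0 then (1::real) else 0) = 1"
      using True by (intro prod.neutral) auto
    show ?thesis by (simp only: split S0 P1) (use fS in linarith)
  next
    case False
    then obtain i where "i \<in> {1..t}" "f i \<noteq> 0" by blast
    hence P0: "(\<Prod>i\<in>{1..t}. if f i = 0 then (1::real) else 0) = 0"
      by (intro prod_zero) auto
    show ?thesis by (simp only: split P0) (use IH M in linarith)
  qed
qed

lemma prod_sub_ge:
  fixes q :: "nat \<Rightarrow> real"
  assumes "finite B" "A \<subseteq> B" "\<And>i. i \<in> B \<Longrightarrow> 0 \<le> q i \<and> q i \<le> 1"
  shows "(\<Prod>i\<in>B. q i) \<le> (\<Prod>i\<in>A. q i)"
proof -
  have "(\<Prod>i\<in>B. q i) = (\<Prod>i\<in>B - A. q i) * (\<Prod>i\<in>A. q i)"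
    using assms by (simp add: prod.subset_diff)
  moreover have "(\<Prod>i\<in>B - A. q i) \<le> 1" using assms by (intro prod_le_1) auto
  moreover have "0 \<le> (\<Prod>i\<in>A. q i)" using assms by (intro prod_nonneg) auto
  moreover have "0 \<le> (\<Prod>i\<in>B - A. q i)" using assms by (intro prod_nonneg) auto
  ultimately show ?thesis using mult_left_le_one_le[of "prod q A" "prod q (B-A)"] by simp
qed

theorem mainTheorem3:
  fixes M :: "'a measure" and X :: "nat \<Rightarrow> 'a \<Rightarrow> real" and L :: real and t :: nat
  assumes "prob_space M"
    and "L > 0"
    and "prob_space.indep_vars M (\<lambda>_. borel) X {1..t}"
    and "\<And>j. j \<in> {1..t} \<Longrightarrow> countable (X j ` space M)"
    and "\<And>j x. j \<in> {1..t} \<Longrightarrow> x \<in> space M \<Longrightarrow> X j x = 0 \<or> X j x \<ge> L"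
    and "(\<Sum>j\<in>{1..t}. \<integral>\<^sup>+ x. ennreal (X j x) \<partial>M) \<ge> ennreal L"
  shows "(\<integral>\<^sup>+ x. ennreal (Max ((\<lambda>j. X j x) ` {1..t})) \<partial>M) \<ge> ennreal (L / 2)"
proof -
  interpret P: prob_space M by fact
  note ind = assms(3)
  have t1: "t \<ge> 1"
  proof (rule ccontr)
    assume "\<not> t \<ge> 1" then have "t = 0" by simp
    then show False using assms(2,6) by simp
  qed
  have meas: "X j \<in> borel_measurable M" if "j \<in> {1..t}" for j
    using ind that by (auto simp: P.indep_vars_def2)
  have nonneg: "X j x \<ge> 0" if "j \<in> {1..t}" "x \<in> space M" for j x
    using assms(2) assms(5)[OF that] by auto
  define q where "q i = P.prob (X i -` {0} \<inter> space M)" for i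
  define e where "e j = (\<integral>\<^sup>+ x. ennreal (X j x) \<partial>M)" for j
  define Mx where "Mx x = Max ((\<lambda>j. X j x) ` {1..t})" for x
  have q01: "0 \<le> q i \<and> q i \<le> 1" for i unfolding q_def by auto
  have Mx0: "Mx x = Max (insert 0 ((\<lambda>j. X j x) ` {1..t}))" if "x \<in> space M" for x
  proof -
    have "X 1 x \<le> Mx x" unfolding Mx_def using t1 by (intro Max_ge) auto
    hence "0 \<le> Mx x" using nonneg[of 1 x] t1 that by auto
    thus ?thesis unfolding Mx_def using t1 by (subst Max_insert) auto
  qed
  define Z where "Z i x = (if X i x = 0 then 1 else 0::real)" for i x
  have measZ: "(\<lambda>x. Z i x) \<in> borel_measurable M" if "i \<in> {1..t}" for i
    unfolding Z_def using meas[OF that] by measurable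
  have intZ: "(\<integral>\<^sup>+ x. ennreal (Z i x) \<partial>M) = ennreal (q i)" if "i \<in> {1..t}" for i
  proof -
    have "(\<integral>\<^sup>+ x. ennreal (Z i x) \<partial>M) = (\<integral>\<^sup>+ x. indicator (X i -` {0} \<inter> space M) x \<partial>M)"
      by (intro nn_integral_cong) (auto simp: Z_def indicator_def)
    also have "\<dots> = emeasure M (X i -` {0} \<inter> space M)"
      using meas[OF that] by (intro nn_integral_indicator measurable_sets) auto
    also have "\<dots> = ennreal (q i)" unfolding q_def by (simp add: P.emeasure_eq_measure)
    finally show ?thesis .
  qed
  have term_int: "(\<integral>\<^sup>+ x. ennreal (X j x * (\<Prod>i\<in>{1..<j}. Z i x)) \<partial>M) = e j * ennreal (\<Prod>i\<in>{1..<j}. q i)"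
    if j: "j \<in> {1..t}" for j
  proof -
    define g where "g i v = (if i = j then max v 0 else if v = 0 then 1 else 0::real)" for i v
    have gm: "g i \<in> borel_measurable borel" for i unfolding g_def by measurable
    have ind2: "P.indep_vars (\<lambda>_. borel) (\<lambda>i x. ennreal (g i (X i x))) {1..j}"
      using j gm by (intro P.indep_vars_compose2[OF P.indep_vars_subset[OF ind]]) auto
    have jI: "{1..j} = insert j {1..<j}" using j by auto
    have "(\<integral>\<^sup>+ x. ennreal (X j x * (\<Prod>i\<in>{1..<j}. Z i x)) \<partial>M)
        = (\<integral>\<^sup>+ x. (\<Prod>i\<in>{1..j}. ennreal (g i (X i x))) \<partial>M)"
    proof (intro nn_integral_cong)
      fix x assume x: "x \<in> space M"
      have "(\<Prod>i\<in>{1..j}. ennreal (g i (X i x))) = ennreal (g j (X j x)) * (\<Prod>i\<in>{1..<j}. ennreal (g i (X i x)))"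
        unfolding jI by simp
      also have "(\<Prod>i\<in>{1..<j}. ennreal (g i (X i x))) = (\<Prod>i\<in>{1..<j}. ennreal (Z i x))"
        by (intro prod.cong) (auto simp: g_def Z_def)
      also have "\<dots> = ennreal (\<Prod>i\<in>{1..<j}. Z i x)"
        by (rule prod_ennreal) (auto simp: Z_def)
      also have "g j (X j x) = X j x" using nonneg[OF j x] by (simp add: g_def)
      finally show "ennreal (X j x * (\<Prod>i\<in>{1..<j}. Z i x)) = (\<Prod>i\<in>{1..j}. ennreal (g i (X i x)))"
        using nonneg[OF j x] by (simp add: ennreal_mult Z_def prod_nonneg)
    qed
    also have "\<dots> = (\<Prod>i\<in>{1..j}. \<integral>\<^sup>+ x. ennreal (g i (X i x)) \<partial>M)" by (rule P.indep_vars_nn_integral[OF _ ind2]) auto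
    also have "\<dots> = (\<integral>\<^sup>+ x. ennreal (g j (X j x)) \<partial>M) * (\<Prod>i\<in>{1..<j}. \<integral>\<^sup>+ x. ennreal (g i (X i x)) \<partial>M)"
      unfolding jI by simp
    also have "(\<integral>\<^sup>+ x. ennreal (g j (X j x)) \<partial>M) = e j"
      unfolding e_def using nonneg[OF j] by (intro nn_integral_cong) (simp add: g_def)
    also have "(\<Prod>i\<in>{1..<j}. \<integral>\<^sup>+ x. ennreal (g i (X i x)) \<partial>M) = (\<Prod>i\<in>{1..<j}. ennreal (q i))"
    proof (intro prod.cong refl)
      fix i assume i: "i \<in> {1..<j}"
      hence "i \<in> {1..t}" "i \<noteq> j" using j by auto
      hence "(\<integral>\<^sup>+ x. ennreal (g i (X i x)) \<partial>M) = (\<integral>\<^sup>+ x. ennreal (Z i x) \<partial>M)"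
        by (intro nn_integral_cong) (simp add: g_def Z_def)
      thus "(\<integral>\<^sup>+ x. ennreal (g i (X i x)) \<partial>M) = ennreal (q i)" using intZ[OF \<open>i \<in> {1..t}\<close>] by simp
    qed
    also have "\<dots> = ennreal (\<Prod>i\<in>{1..<j}. q i)"
      by (rule prod_ennreal) (use q01 in auto)
    finally show ?thesis .
  qed
  have term_meas: "(\<lambda>x. ennreal (X j x * (\<Prod>i\<in>{1..<j}. Z i x))) \<in> borel_measurable M"
    if j: "j \<in> {1..t}" for j
  proof -
    have "(\<lambda>x. (\<Prod>i\<in>{1..<j}. Z i x)) \<in> borel_measurable M"
      using j by (intro borel_measurable_prod measZ) auto
    then show ?thesis using meas[OF j] by measurable
  qed
  have bndA: "(\<Sum>j\<in>{1..t}. e j * ennreal (\<Prod>i\<in>{1..<j}. q i)) \<le> (\<integral>\<^sup>+ x. ennreal (Mx x) \<partial>M)"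
  proof -
    have "(\<Sum>j\<in>{1..t}. e j * ennreal (\<Prod>i\<in>{1..<j}. q i))
        = (\<Sum>j\<in>{1..t}. \<integral>\<^sup>+ x. ennreal (X j x * (\<Prod>i\<in>{1..<j}. Z i x)) \<partial>M)"
      by (intro sum.cong refl term_int[symmetric]) auto
    also have "\<dots> = (\<integral>\<^sup>+ x. (\<Sum>j\<in>{1..t}. ennreal (X j x * (\<Prod>i\<in>{1..<j}. Z i x))) \<partial>M)"
      by (rule nn_integral_sum[symmetric]) (rule term_meas)
    also have "\<dots> \<le> (\<integral>\<^sup>+ x. ennreal (Mx x) \<partial>M)"
    proof (intro nn_integral_mono)
      fix x assume x: "x \<in> space M"
      have nn: "0 \<le> X j x * (\<Prod>i\<in>{1..<j}. Z i x)" if "j \<in> {1..t}" for j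
        using nonneg[OF that x] by (intro mult_nonneg_nonneg prod_nonneg) (auto simp: Z_def)
      have "(\<Sum>j\<in>{1..t}. X j x * (\<Prod>i\<in>{1..<j}. Z i x)) \<le> Mx x"
        unfolding Mx0[OF x] Z_def by (rule first_nz) (rule nonneg[OF _ x])
      then show "(\<Sum>j\<in>{1..t}. ennreal (X j x * (\<Prod>i\<in>{1..<j}. Z i x))) \<le> ennreal (Mx x)"
        by (subst sum_ennreal) (use nn in \<open>auto intro: ennreal_leI\<close>)
    qed
    finally show ?thesis .
  qed
  define S where "S = (\<Inter>i\<in>{1..t}. X i -` {0} \<inter> space M)"
  have probS: "P.prob S = (\<Prod>i\<in>{1..t}. q i)"
    unfolding S_def q_def using t1 by (intro P.indep_varsD[OF ind]) auto
  have Ssets: "S \<in> sets M"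
    unfolding S_def using t1 meas by (intro sets.finite_INT measurable_sets) auto
  have bndB: "ennreal L * ennreal (1 - (\<Prod>i\<in>{1..t}. q i)) \<le> (\<integral>\<^sup>+ x. ennreal (Mx x) \<partial>M)"
  proof -
    have "ennreal L * ennreal (1 - (\<Prod>i\<in>{1..t}. q i)) = ennreal L * emeasure M (space M - S)"
      using Ssets probS by (simp add: P.emeasure_eq_measure P.prob_compl)
    also have "\<dots> = (\<integral>\<^sup>+ x. ennreal L * indicator (space M - S) x \<partial>M)"
      using Ssets by (intro nn_integral_cmult_indicator[symmetric]) auto
    also have "\<dots> \<le> (\<integral>\<^sup>+ x. ennreal (Mx x) \<partial>M)"
    proof (intro nn_integral_mono)
      fix x assume x: "x \<in> space M"
      show "ennreal L * indicator (space M - S) x \<le> ennreal (Mx x)"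
      proof (cases "x \<in> S")
        case True then show ?thesis by simp
      next
        case False
        then obtain i where i: "i \<in> {1..t}" "X i x \<noteq> 0" using x t1 unfolding S_def by auto
        hence "L \<le> X i x" using assms(5)[OF i(1) x] by auto
        also have "X i x \<le> Mx x" unfolding Mx_def using i by (intro Max_ge) auto
        finally show ?thesis using False x by (simp add: ennreal_leI)
      qed
    qed
    finally show ?thesis .
  qed
  define Q where "Q = (\<Prod>i\<in>{1..t}. q i)"
  show ?thesis
  proof (cases "Q \<ge> 1/2")
    case True
    have "ennreal (L / 2) = ennreal L * ennreal (1/2)"
      using assms(2) by (subst ennreal_mult[symmetric]) auto
    also have "ennreal L * ennreal (1/2) \<le> (\<Sum>j\<in>{1..t}. e j) * ennreal (1/2)"
      using assms(6) unfolding e_def by (intro mult_right_mono) auto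
    also have "\<dots> = (\<Sum>j\<in>{1..t}. e j * ennreal (1/2))" by (rule sum_distrib_right)
    also have "\<dots> \<le> (\<Sum>j\<in>{1..t}. e j * ennreal (\<Prod>i\<in>{1..<j}. q i))"
    proof (intro sum_mono mult_left_mono ennreal_leI)
      fix j assume "j \<in> {1..t}"
      hence "Q \<le> (\<Prod>i\<in>{1..<j}. q i)" unfolding Q_def using q01 by (intro prod_sub_ge) auto
      then show "1/2 \<le> (\<Prod>i\<in>{1..<j}. q i)" using True by linarith
    qed auto
    also have "\<dots> \<le> (\<integral>\<^sup>+ x. ennreal (Mx x) \<partial>M)" by (rule bndA)
    finally show ?thesis unfolding Mx_def .
  next
    case False
    have "L * Q \<le> L * (1/2)" using False assms(2) by (intro mult_left_mono) auto
    hence "ennreal (L / 2) \<le> ennreal (L * (1 - Q))"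
      by (intro ennreal_leI) (simp add: algebra_simps)
    also have "\<dots> = ennreal L * ennreal (1 - Q)" using assms(2) False by (intro ennreal_mult) auto
    also have "\<dots> \<le> (\<integral>\<^sup>+ x. ennreal (Mx x) \<partial>M)" using bndB unfolding Q_def .
    finally show ?thesis unfolding Mx_def .
  qed
qed
end
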